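(* Let $\sigma:\mathbb{R}\to\mathbb{R}$ satisfy $|\sigma(x)|\le1$ for all $x$, be $L$-Lipschitz, and be $(R,\varepsilon)$-nondegenerate with $R\ge1$, $\varepsilon<1$. Let $\ell\ge20(R+L)/\varepsilon$, $\sigma^{(\ell)}(x)=\sigma(x)e^{-x^2/(2\ell^2)}$, and define $$a=\frac{\varepsilon}{8}\sqrt{\frac{1}{R\ell}},\qquad B=4\ell\log\!\Big(\frac{\ell R}{\varepsilon}\Big),\qquad \mathcal{S}^{(\ell)}=[-B,-a]\cup[a,B].$$ Then $$\int_{\mathcal{S}^{(\ell)}}|\widehat{\sigma^{(\ell)}}(y)|^2\,dy\ge\frac{\varepsilon^2}{8R\ell^2}.$$
   Context: Fourier transform: $\widehat g(y)=\frac{1}{\sqrt{2\pi}}\int_{-\infty}^{\infty}e^{-\mathrm{i}yx}g(x)\,dx$. A function $\sigma$ is $(R,\varepsilon)$-nondegenerate if there are $x_1,x_2\in[-R,R]$ with $\sigma(x_1)-\sigma(x_2)\ge\varepsilon$. *)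

theory Defs
  imports "HOL-Analysis.Analysis"
begin

definition fourier :: "(real \<Rightarrow> complex) \<Rightarrow> real \<Rightarrow> complex" where
  "fourier g y = complex_of_real (1 / sqrt (2 * pi)) *
     integral UNIV (\<lambda>x. exp (- \<i> * complex_of_real (y * x)) * g x)"

definition nondegenerate :: "real \<Rightarrow> real \<Rightarrow> (real \<Rightarrow> real) \<Rightarrow> bool" where
  "nondegenerate R \<epsilon> \<sigma> \<longleftrightarrow>
     (\<exists>x1\<in>{-R..R}. \<exists>x2\<in>{-R..R}. \<sigma> x1 - \<sigma> x2 \<ge> \<epsilon>)"

end

theory Submission
  imports Defs "HOL-Probability.Characteristic_Functions"
begin


lemma std_cos:
  "has_bochner_integral lborel (\<lambda>x. std_normal_density x * cos (t * x)) (exp (- (t^2) / 2))"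
proof -
  have int: "integrable lborel (\<lambda>x. std_normal_density x * cos (t * x))"
  proof (rule Bochner_Integration.integrable_bound[of _ "std_normal_density"])
    show "AE x in lborel. norm (std_normal_density x * cos (t * x)) \<le> norm (std_normal_density x)"
    proof (intro AE_I2)
      fix x
      have "\<bar>std_normal_density x\<bar> * \<bar>cos (t * x)\<bar> \<le> \<bar>std_normal_density x\<bar> * 1"
        by (intro mult_left_mono) auto
      then show "norm (std_normal_density x * cos (t * x)) \<le> norm (std_normal_density x)"
        by (simp add: abs_mult)
    qed
  qed auto
  have "char std_normal_distribution t = complex_of_real (exp (- (t^2) / 2))"
    by (simp add: char_std_normal_distribution)
  then have "(LINT x|lborel. std_normal_density x *\<^sub>R iexp (t * x)) = complex_of_real (exp (- (t^2) / 2))"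
    unfolding char_def by (subst (asm) integral_density) (auto simp: normal_density_nonneg)
  then have "Re (LINT x|lborel. std_normal_density x *\<^sub>R iexp (t * x)) = exp (- (t^2) / 2)"
    by simp
  moreover have "Re (LINT x|lborel. std_normal_density x *\<^sub>R iexp (t * x)) = (LINT x|lborel. std_normal_density x * cos (t * x))"
  proof -
    have "(LINT x|lborel. std_normal_density x * cos (t * x)) = (LINT x|lborel. Re (std_normal_density x *\<^sub>R iexp (t * x)))"
      by (rule Bochner_Integration.integral_cong) (simp_all add: Re_exp)
    also have "\<dots> = Re (LINT x|lborel. std_normal_density x *\<^sub>R iexp (t * x))"
    proof (rule integral_Re)
      show "integrable lborel (\<lambda>x. std_normal_density x *\<^sub>R iexp (t * x))"
        by (rule Bochner_Integration.integrable_bound[of _ "std_normal_density"])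
          (auto simp: normal_density_nonneg)
    qed
    finally show ?thesis by simp
  qed
  ultimately show ?thesis using int by (simp add: has_bochner_integral_iff)
qed

lemma gauss_cos:
  fixes l t :: real assumes l: "l > 0"
  shows "has_bochner_integral lborel (\<lambda>y. exp (- y\<^sup>2 / (2 * l\<^sup>2)) * cos (y * t)) (l * sqrt (2 * pi) * exp (- (l * t)\<^sup>2 / 2))"
proof -
  have "has_bochner_integral lborel (\<lambda>x. sqrt (2*pi) * (std_normal_density x * cos ((l*t) * x))) (sqrt (2*pi) * exp (- ((l*t)^2) / 2))"
    by (intro has_bochner_integral_mult_right std_cos)
  moreover have "(\<lambda>x. sqrt (2*pi) * (std_normal_density x * cos ((l*t) * x))) = (\<lambda>x. exp (- (0 + l * x)\<^sup>2 / (2 * l\<^sup>2)) * cos ((0 + l * x) * t))"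
    using l by (auto simp: std_normal_density_def power_mult_distrib mult_ac intro!: ext)
  ultimately have H: "has_bochner_integral lborel (\<lambda>x. exp (- (0 + l * x)\<^sup>2 / (2 * l\<^sup>2)) * cos ((0 + l * x) * t)) (sqrt (2 * pi) * exp (- (l * t)\<^sup>2 / 2))"
    by (simp only: power_mult_distrib)
  have e: "(l * sqrt (2 * pi) * exp (- (l * t)\<^sup>2 / 2)) /\<^sub>R \<bar>l\<bar> = sqrt (2 * pi) * exp (- (l * t)\<^sup>2 / 2)"
    using l by simp
  have "has_bochner_integral lborel (\<lambda>x. exp (- (0 + l * x)\<^sup>2 / (2 * l\<^sup>2)) * cos ((0 + l * x) * t)) ((l * sqrt (2 * pi) * exp (- (l * t)\<^sup>2 / 2)) /\<^sub>R \<bar>l\<bar>)"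
    by (subst e) (rule H)
  then show ?thesis
    using lborel_has_bochner_integral_real_affine_iff[of l "\<lambda>y. exp (- y\<^sup>2 / (2 * l\<^sup>2)) * cos (y * t)" _ 0] l by simp
qed


lemma gs_int:
  fixes l :: real assumes l: "l > 0"
  shows "has_bochner_integral lborel (\<lambda>y. exp (- y\<^sup>2 / (2 * l\<^sup>2))) (l * sqrt (2 * pi))"
  using gauss_cos[OF l, of 0] by simp

lemma gs_le1: "exp (- y\<^sup>2 / (2 * l\<^sup>2)) \<le> (1::real)"
  by simp

lemma u_exp_le: fixes u :: real assumes "u \<ge> 0" shows "u * exp (- u\<^sup>2 / 2) \<le> 1"
proof -
  have "u \<le> 1 + u\<^sup>2 / 2"
  proof -
    have "0 \<le> (u - 1)\<^sup>2" by simp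
    then show ?thesis by (simp add: power2_diff)
  qed
  also have "\<dots> \<le> exp (u\<^sup>2 / 2)" by (rule exp_ge_add_one_self)
  finally have "u \<le> exp (u\<^sup>2 / 2)" .
  then have "u * exp (- u\<^sup>2 / 2) \<le> exp (u\<^sup>2 / 2) * exp (- u\<^sup>2 / 2)"
    by (intro mult_right_mono) auto
  also have "\<dots> = 1" by (simp add: exp_minus[symmetric] exp_add[symmetric])
  finally show ?thesis .
qed

lemma gs_lip:
  fixes l x y :: real assumes l: "l \<ge> 1"
  shows "\<bar>exp (- x\<^sup>2 / (2 * l\<^sup>2)) - exp (- y\<^sup>2 / (2 * l\<^sup>2))\<bar> \<le> \<bar>x - y\<bar>"
proof -
  define g where "g = (\<lambda>x::real. exp (- x\<^sup>2 / (2 * l\<^sup>2)))"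
  define g' where "g' = (\<lambda>x::real. exp (- x\<^sup>2 / (2 * l\<^sup>2)) * (- x / l\<^sup>2))"
  have D: "DERIV g z :> g' z" for z
    unfolding g_def g'_def using l
    by (auto intro!: derivative_eq_intros simp: field_simps power2_eq_square)
  have B: "\<bar>g' z\<bar> \<le> 1" for z
  proof -
    have "\<bar>z\<bar> / l * exp (- (\<bar>z\<bar> / l)\<^sup>2 / 2) \<le> 1"
      using l by (intro u_exp_le) auto
    moreover have "(\<bar>z\<bar> / l)\<^sup>2 / 2 = z\<^sup>2 / (2 * l\<^sup>2)"
      by (simp add: power_divide)
    ultimately have "\<bar>z\<bar> / l * exp (- z\<^sup>2 / (2 * l\<^sup>2)) \<le> 1" by simp
    moreover have "\<bar>g' z\<bar> = (\<bar>z\<bar> / l * exp (- z\<^sup>2 / (2 * l\<^sup>2))) / l"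
      unfolding g'_def using l by (simp add: abs_mult power2_eq_square field_simps)
    moreover have "(\<bar>z\<bar> / l * exp (- z\<^sup>2 / (2 * l\<^sup>2))) / l \<le> 1 / 1"
      using l calculation(1) by (intro frac_le) auto
    ultimately show ?thesis by simp
  qed
  have main: "\<bar>g b - g a\<bar> \<le> \<bar>b - a\<bar>" if ab: "a < b" for a b
  proof -
    obtain z where "a < z" "z < b" "g b - g a = (b - a) * g' z"
      using MVT2[of a b g g', OF ab D] by blast
    then have "\<bar>g b - g a\<bar> = \<bar>b - a\<bar> * \<bar>g' z\<bar>" by (simp add: abs_mult)
    also have "\<dots> \<le> \<bar>b - a\<bar> * 1" using B by (intro mult_left_mono) auto
    finally show ?thesis by simp
  qed
  show ?thesis
  proof (cases x y rule: linorder_cases)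
    case less then show ?thesis using main[OF less] unfolding g_def by (simp add: abs_minus_commute)
  next
    case greater then show ?thesis using main[OF greater] unfolding g_def by simp
  qed simp
qed

lemma cos_diff_le: "\<bar>cos a - cos b\<bar> \<le> \<bar>a - b::real\<bar>"
proof -
  have "\<bar>cos a - cos b\<bar> = 2 * \<bar>sin ((a + b) / 2)\<bar> * \<bar>sin ((b - a) / 2)\<bar>"
    by (simp add: cos_diff_cos abs_mult)
  also have "\<dots> \<le> 2 * 1 * \<bar>(b - a) / 2\<bar>"
    by (intro mult_mono abs_sin_x_le_abs_x) auto
  finally show ?thesis by simp
qed




definition gs :: "real \<Rightarrow> real \<Rightarrow> real" where "gs l x = exp (- x\<^sup>2 / (2 * l\<^sup>2))"

lemma gs_meas[measurable]: "gs l \<in> borel_measurable borel"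
  unfolding gs_def by measurable

lemma gs_pos: "gs l x > 0" unfolding gs_def by simp
lemma gs_le_1: "gs l x \<le> 1" unfolding gs_def by simp

context
  fixes \<sigma> :: "real \<Rightarrow> real" and l :: real
  assumes bdd: "\<And>x. \<bar>\<sigma> x\<bar> \<le> 1" and smeas[measurable]: "\<sigma> \<in> borel_measurable borel"
    and lpos: "l > 0"
begin

lemma gs_integrable: "integrable lborel (gs l)"
  using gs_int[OF lpos] unfolding gs_def[abs_def] by (simp add: has_bochner_integral_iff)

lemma gs_integral: "integral\<^sup>L lborel (gs l) = l * sqrt (2 * pi)"
  using gs_int[OF lpos] unfolding gs_def[abs_def] by (simp add: has_bochner_integral_iff)

lemma fx_bound: "\<bar>\<sigma> x * gs l x\<bar> \<le> gs l x"
proof -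
  have "\<bar>\<sigma> x\<bar> * gs l x \<le> 1 * gs l x" using bdd gs_pos[of l x] by (intro mult_right_mono) auto
  then show ?thesis using gs_pos[of l x] by (simp add: abs_mult)
qed

lemma bound_integrable:
  fixes h :: "real \<Rightarrow> 'b::{banach, second_countable_topology}"
  assumes [measurable]: "h \<in> borel_measurable borel" and "\<And>x. norm (h x) \<le> c * gs l x"
  shows "integrable lborel h"
proof (rule Bochner_Integration.integrable_bound[of _ "\<lambda>x. c * gs l x"])
  show "integrable lborel (\<lambda>x. c * gs l x)" using gs_integrable by simp
  show "AE x in lborel. norm (h x) \<le> norm (c * gs l x)"
    using assms(2) by (intro AE_I2) (smt (verit) real_norm_def)
qed simp

lemma bound_integral:
  fixes h :: "real \<Rightarrow> 'b::{banach, second_countable_topology}"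
  assumes [measurable]: "h \<in> borel_measurable borel" and "\<And>x. norm (h x) \<le> c * gs l x"
  shows "norm (integral\<^sup>L lborel h) \<le> c * (l * sqrt (2 * pi))"
proof -
  have "norm (integral\<^sup>L lborel h) \<le> integral\<^sup>L lborel (\<lambda>x. norm (h x))"
    by (rule integral_norm_bound)
  also have "\<dots> \<le> integral\<^sup>L lborel (\<lambda>x. c * gs l x)"
  proof (rule integral_mono)
    show "integrable lborel (\<lambda>x. norm (h x))" using bound_integrable[OF assms] by simp
    show "integrable lborel (\<lambda>x. c * gs l x)" using gs_integrable by simp
  qed (use assms(2) in auto)
  also have "\<dots> = c * (l * sqrt (2 * pi))" using gs_integral by simp
  finally show ?thesis .
qed

abbreviation "FF \<equiv> (\<lambda>x. complex_of_real (\<sigma> x * gs l x))"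

lemma kern_bound: "norm (exp (- \<i> * complex_of_real (y * x)) * FF x) \<le> 1 * gs l x"
proof -
  have "norm (exp (- \<i> * complex_of_real (y * x))) = 1"
  proof -
    have "- \<i> * complex_of_real (y * x) = \<i> * complex_of_real (- (y * x))" by simp
    then show ?thesis by (simp only: norm_exp_i_times)
  qed
  then show ?thesis using fx_bound[of x] by (simp add: norm_mult)
qed

lemma kern_meas[measurable]: "(\<lambda>x. exp (- \<i> * complex_of_real (y * x)) * FF x) \<in> borel_measurable borel"
proof -
  have "continuous_on UNIV (\<lambda>x. exp (- \<i> * complex_of_real (y * x)))"
    by (intro continuous_intros)
  then have [measurable]: "(\<lambda>x. exp (- \<i> * complex_of_real (y * x))) \<in> borel_measurable borel"
    by (rule borel_measurable_continuous_onI)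
  show ?thesis by measurable
qed

lemma kern_int: "integrable lborel (\<lambda>x. exp (- \<i> * complex_of_real (y * x)) * FF x)"
  by (rule bound_integrable[OF kern_meas kern_bound])

lemma fourier_eq:
  "fourier FF y = complex_of_real (1 / sqrt (2 * pi)) * (LINT x|lborel. exp (- \<i> * complex_of_real (y * x)) * FF x)"
  unfolding fourier_def using has_integral_integral_lborel[OF kern_int[of y]]
  by (simp add: integral_unique)

lemma fourier_norm: "cmod (fourier FF y) \<le> l"
proof -
  have "cmod (fourier FF y) = (1 / sqrt (2 * pi)) * cmod (LINT x|lborel. exp (- \<i> * complex_of_real (y * x)) * FF x)"
    unfolding fourier_eq by (simp add: norm_mult norm_divide)
  also have "\<dots> \<le> (1 / sqrt (2 * pi)) * (1 * (l * sqrt (2 * pi)))"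
    by (intro mult_left_mono bound_integral[OF kern_meas kern_bound]) auto
  finally show ?thesis by simp
qed

lemma fourier_meas[measurable]: "(\<lambda>y. fourier FF y) \<in> borel_measurable borel"
proof -
  have "(\<lambda>y. LINT x|lborel. exp (- \<i> * complex_of_real (y * x)) * FF x) \<in> borel_measurable borel"
  proof (rule lborel.borel_measurable_lebesgue_integral)
    have "continuous_on UNIV (\<lambda>p::real\<times>real. exp (- \<i> * complex_of_real (fst p * snd p)))"
      by (intro continuous_intros)
    then have "(\<lambda>p::real\<times>real. exp (- \<i> * complex_of_real (fst p * snd p))) \<in> borel_measurable borel"
      by (rule borel_measurable_continuous_onI)
    then have [measurable]: "(\<lambda>p::real\<times>real. exp (- \<i> * complex_of_real (fst p * snd p))) \<in> borel_measurable (borel \<Otimes>\<^sub>M lborel)"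
      by (simp add: borel_prod)
    show "(\<lambda>(y, x). exp (- \<i> * complex_of_real (y * x)) * FF x) \<in> borel_measurable (borel \<Otimes>\<^sub>M lborel)"
      by measurable
  qed
  then show ?thesis unfolding fourier_eq by measurable
qed

lemma Q_eq:
  "Re (fourier FF y * exp (\<i> * complex_of_real (y * x0))) =
     1 / sqrt (2 * pi) * (LINT x|lborel. \<sigma> x * gs l x * cos (y * (x - x0)))"
proof -
  have "fourier FF y * exp (\<i> * complex_of_real (y * x0)) =
     complex_of_real (1 / sqrt (2 * pi)) * (LINT x|lborel. exp (- \<i> * complex_of_real (y * x)) * FF x * exp (\<i> * complex_of_real (y * x0)))"
    unfolding fourier_eq by simp
  also have "(LINT x|lborel. exp (- \<i> * complex_of_real (y * x)) * FF x * exp (\<i> * complex_of_real (y * x0)))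
      = (LINT x|lborel. FF x * exp (\<i> * complex_of_real (y * (x0 - x))))"
  proof (rule Bochner_Integration.integral_cong)
    fix x
    have "exp (- \<i> * complex_of_real (y * x)) * exp (\<i> * complex_of_real (y * x0)) = exp (\<i> * complex_of_real (y * (x0 - x)))"
      by (simp add: exp_add[symmetric] algebra_simps)
    then show "exp (- \<i> * complex_of_real (y * x)) * FF x * exp (\<i> * complex_of_real (y * x0)) = FF x * exp (\<i> * complex_of_real (y * (x0 - x)))"
      by (simp add: mult_ac)
  qed simp
  finally have 1: "fourier FF y * exp (\<i> * complex_of_real (y * x0)) =
     complex_of_real (1 / sqrt (2 * pi)) * (LINT x|lborel. FF x * exp (\<i> * complex_of_real (y * (x0 - x))))" .
  have int: "integrable lborel (\<lambda>x. FF x * exp (\<i> * complex_of_real (y * (x0 - x))))"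
  proof (rule bound_integrable[where c=1])
    show "norm (FF x * exp (\<i> * complex_of_real (y * (x0 - x)))) \<le> 1 * gs l x" for x
      using fx_bound[of x] by (simp add: norm_mult)
  qed measurable
  have "Re (LINT x|lborel. FF x * exp (\<i> * complex_of_real (y * (x0 - x)))) =
        (LINT x|lborel. Re (FF x * exp (\<i> * complex_of_real (y * (x0 - x)))))"
    by (rule integral_Re[OF int, symmetric])
  also have "\<dots> = (LINT x|lborel. \<sigma> x * gs l x * cos (y * (x - x0)))"
  proof (rule Bochner_Integration.integral_cong)
    fix x
    have "cos (y * (x0 - x)) = cos (- (y * (x - x0)))" by (simp add: algebra_simps)
    also have "\<dots> = cos (y * (x - x0))" by (rule cos_minus)
    finally show "Re (FF x * exp (\<i> * complex_of_real (y * (x0 - x)))) = \<sigma> x * gs l x * cos (y * (x - x0))"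
      by (simp add: Re_exp)
  qed simp
  finally show ?thesis unfolding 1 by simp
qed

end




definition Pr :: "(real \<Rightarrow> real) \<Rightarrow> real \<Rightarrow> real \<Rightarrow> real \<Rightarrow> real \<Rightarrow> real" where
  "Pr \<sigma> l x1 x2 y = 1 / sqrt (2 * pi) * (LINT x|lborel. \<sigma> x * gs l x * (cos (y * (x - x1)) - cos (y * (x - x2))))"

context
  fixes \<sigma> :: "real \<Rightarrow> real" and l x1 x2 :: real
  assumes bdd: "\<And>x. \<bar>\<sigma> x\<bar> \<le> 1" and smeas[measurable]: "\<sigma> \<in> borel_measurable borel"
    and lpos: "l > 0"
begin

abbreviation "GG \<equiv> (\<lambda>x. complex_of_real (\<sigma> x * gs l x))"

lemma cosint: "integrable lborel (\<lambda>x. \<sigma> x * gs l x * cos (y * (x - x0)))"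
proof (rule bound_integrable[OF bdd smeas lpos, where c=1])
  show "norm (\<sigma> x * gs l x * cos (y * (x - x0))) \<le> 1 * gs l x" for x
  proof -
    have "\<bar>\<sigma> x * gs l x\<bar> * \<bar>cos (y * (x - x0))\<bar> \<le> gs l x * 1"
      by (intro mult_mono fx_bound[OF bdd smeas lpos]) (auto simp: gs_pos less_imp_le)
    then show ?thesis by (simp add: abs_mult)
  qed
qed measurable

lemma P1: "Pr \<sigma> l x1 x2 y = Re (fourier GG y * exp (\<i> * complex_of_real (y * x1))) - Re (fourier GG y * exp (\<i> * complex_of_real (y * x2)))"
proof -
  have "(LINT x|lborel. \<sigma> x * gs l x * (cos (y * (x - x1)) - cos (y * (x - x2)))) =
    (LINT x|lborel. \<sigma> x * gs l x * cos (y * (x - x1))) - (LINT x|lborel. \<sigma> x * gs l x * cos (y * (x - x2)))"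
    unfolding right_diff_distrib[of "\<sigma> _ * gs l _"] by (rule Bochner_Integration.integral_diff[OF cosint cosint])
  then show ?thesis
    unfolding Q_eq[OF bdd smeas lpos] Pr_def by (simp add: right_diff_distrib)
qed

lemma P2: "\<bar>Pr \<sigma> l x1 x2 y\<bar> \<le> 2 * cmod (fourier GG y)"
proof -
  have "\<bar>Pr \<sigma> l x1 x2 y\<bar> = \<bar>Re (fourier GG y * (exp (\<i> * complex_of_real (y * x1)) - exp (\<i> * complex_of_real (y * x2))))\<bar>"
    unfolding P1 by (simp add: right_diff_distrib)
  also have "\<dots> \<le> cmod (fourier GG y * (exp (\<i> * complex_of_real (y * x1)) - exp (\<i> * complex_of_real (y * x2))))"
    by (rule abs_Re_le_cmod)
  also have "\<dots> = cmod (fourier GG y) * cmod (exp (\<i> * complex_of_real (y * x1)) - exp (\<i> * complex_of_real (y * x2)))"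
    by (simp add: norm_mult)
  also have "\<dots> \<le> cmod (fourier GG y) * 2"
  proof (intro mult_left_mono)
    have "cmod (exp (\<i> * complex_of_real (y * x1)) - exp (\<i> * complex_of_real (y * x2))) \<le>
        cmod (exp (\<i> * complex_of_real (y * x1))) + cmod (exp (\<i> * complex_of_real (y * x2)))"
      by (rule norm_triangle_ineq4)
    then show "cmod (exp (\<i> * complex_of_real (y * x1)) - exp (\<i> * complex_of_real (y * x2))) \<le> 2"
      by (simp only: norm_exp_i_times one_add_one)
  qed simp
  finally show ?thesis by simp
qed

lemma P_gen: assumes "\<And>x. \<bar>cos (y * (x - x1)) - cos (y * (x - x2))\<bar> \<le> c"
  shows "\<bar>Pr \<sigma> l x1 x2 y\<bar> \<le> c * l"
proof -
  have "norm (LINT x|lborel. \<sigma> x * gs l x * (cos (y * (x - x1)) - cos (y * (x - x2)))) \<le> c * (l * sqrt (2 * pi))"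
  proof (rule bound_integral[OF bdd smeas lpos])
    show "norm (\<sigma> x * gs l x * (cos (y * (x - x1)) - cos (y * (x - x2)))) \<le> c * gs l x" for x
    proof -
      have "\<bar>\<sigma> x * gs l x\<bar> * \<bar>cos (y * (x - x1)) - cos (y * (x - x2))\<bar> \<le> gs l x * c"
        by (intro mult_mono fx_bound[OF bdd smeas lpos] assms) (auto simp: gs_pos less_imp_le)
      then show ?thesis by (simp add: abs_mult mult_ac)
    qed
  qed measurable
  then show ?thesis unfolding Pr_def by (simp add: abs_mult pos_divide_le_eq mult_ac)
qed

lemma P3: "\<bar>Pr \<sigma> l x1 x2 y\<bar> \<le> 2 * l"
proof (rule P_gen)
  fix x
  have "\<bar>cos (y * (x - x1)) - cos (y * (x - x2))\<bar> \<le> \<bar>cos (y * (x - x1))\<bar> + \<bar>cos (y * (x - x2))\<bar>"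
    by (rule abs_triangle_ineq4)
  also have "\<dots> \<le> 1 + 1" by (intro add_mono) auto
  finally show "\<bar>cos (y * (x - x1)) - cos (y * (x - x2))\<bar> \<le> 2" by simp
qed

lemma P4: "\<bar>Pr \<sigma> l x1 x2 y\<bar> \<le> \<bar>y\<bar> * \<bar>x1 - x2\<bar> * l"
proof (rule P_gen)
  fix x
  have "\<bar>cos (y * (x - x1)) - cos (y * (x - x2))\<bar> \<le> \<bar>y * (x - x1) - y * (x - x2)\<bar>"
    by (rule cos_diff_le)
  also have "\<dots> = \<bar>y\<bar> * \<bar>x1 - x2\<bar>" by (simp add: abs_mult[symmetric] algebra_simps)
  finally show "\<bar>cos (y * (x - x1)) - cos (y * (x - x2))\<bar> \<le> \<bar>y\<bar> * \<bar>x1 - x2\<bar>" .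
qed

lemma P_meas[measurable]: "Pr \<sigma> l x1 x2 \<in> borel_measurable borel"
proof -
  have "(\<lambda>y. LINT x|lborel. \<sigma> x * gs l x * (cos (y * (x - x1)) - cos (y * (x - x2)))) \<in> borel_measurable borel"
  proof (rule lborel.borel_measurable_lebesgue_integral)
    show "(\<lambda>(y, x). \<sigma> x * gs l x * (cos (y * (x - x1)) - cos (y * (x - x2)))) \<in> borel_measurable (borel \<Otimes>\<^sub>M lborel)"
      by measurable
  qed
  then show ?thesis unfolding Pr_def[abs_def] by measurable
qed

end



context
  fixes \<sigma> :: "real \<Rightarrow> real" and l x1 x2 :: real
  assumes bdd: "\<And>x. \<bar>\<sigma> x\<bar> \<le> 1" and smeas[measurable]: "\<sigma> \<in> borel_measurable borel"
    and lpos: "l > 0"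
begin

lemma gcos_int: "has_bochner_integral lborel (\<lambda>y. gs l y * cos (y * t)) (l * sqrt (2 * pi) * exp (- (l * t)\<^sup>2 / 2))"
  using gauss_cos[OF lpos, of t] unfolding gs_def .

lemma fub: "(LINT y|lborel. gs l y * Pr \<sigma> l x1 x2 y) =
  (LINT x|lborel. \<sigma> x * gs l x * (l * exp (- (l * (x - x1))\<^sup>2 / 2) - l * exp (- (l * (x - x2))\<^sup>2 / 2)))"
proof -
  define H where "H = (\<lambda>x y. gs l y * (\<sigma> x * gs l x * (cos (y * (x - x1)) - cos (y * (x - x2)))))"
  have Hm[measurable]: "(\<lambda>(x,y). H x y) \<in> borel_measurable (lborel \<Otimes>\<^sub>M lborel)"
    unfolding H_def by measurable
  have prod_int: "integrable (lborel \<Otimes>\<^sub>M lborel) (\<lambda>(x,y). 2 * gs l x * gs l y)"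
  proof (rule lborel_pair.Fubini_integrable)
    show "(\<lambda>(x,y). 2 * gs l x * gs l y) \<in> borel_measurable (lborel \<Otimes>\<^sub>M lborel)" by measurable
    have "(\<lambda>x. \<integral>y. norm (case (x, y) of (x, y) \<Rightarrow> 2 * gs l x * gs l y) \<partial>lborel) = (\<lambda>x. 2 * gs l x * (l * sqrt (2 * pi)))"
    proof
      fix x
      have "(\<integral>y. norm (case (x, y) of (x, y) \<Rightarrow> 2 * gs l x * gs l y) \<partial>lborel) = (\<integral>y. 2 * gs l x * gs l y \<partial>lborel)"
        by (rule Bochner_Integration.integral_cong) (auto simp: gs_pos less_imp_le)
      also have "\<dots> = 2 * gs l x * (l * sqrt (2 * pi))"
        using gs_integral[OF bdd smeas lpos] by simp
      finally show "(\<integral>y. norm (case (x, y) of (x, y) \<Rightarrow> 2 * gs l x * gs l y) \<partial>lborel) = 2 * gs l x * (l * sqrt (2 * pi))" .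
    qed
    then show "integrable lborel (\<lambda>x. \<integral>y. norm (case (x, y) of (x, y) \<Rightarrow> 2 * gs l x * gs l y) \<partial>lborel)"
      using gs_integrable[OF bdd smeas lpos] by simp
    show "AE x in lborel. integrable lborel (\<lambda>y. case (x, y) of (x, y) \<Rightarrow> 2 * gs l x * gs l y)"
      using gs_integrable[OF bdd smeas lpos] by simp
  qed
  have Hint: "integrable (lborel \<Otimes>\<^sub>M lborel) (\<lambda>(x,y). H x y)"
  proof (rule Bochner_Integration.integrable_bound[OF prod_int])
    show "AE p in lborel \<Otimes>\<^sub>M lborel. norm (case p of (x, y) \<Rightarrow> H x y) \<le> norm (case p of (x, y) \<Rightarrow> 2 * gs l x * gs l y)"
    proof (intro AE_I2)
      fix p :: "real \<times> real"
      obtain x y where p: "p = (x, y)" by (cases p)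
      have "\<bar>gs l y\<bar> * (\<bar>\<sigma> x * gs l x\<bar> * \<bar>cos (y * (x - x1)) - cos (y * (x - x2))\<bar>) \<le> gs l y * (gs l x * 2)"
      proof (intro mult_mono)
        show "\<bar>cos (y * (x - x1)) - cos (y * (x - x2))\<bar> \<le> 2"
          using abs_triangle_ineq4[of "cos (y * (x - x1))" "cos (y * (x - x2))"]
            abs_cos_le_one[of "y * (x - x1)"] abs_cos_le_one[of "y * (x - x2)"] by linarith
      qed (auto simp: fx_bound[OF bdd smeas lpos] gs_pos less_imp_le)
      then show "norm (case p of (x, y) \<Rightarrow> H x y) \<le> norm (case p of (x, y) \<Rightarrow> 2 * gs l x * gs l y)"
        unfolding p H_def by (simp add: abs_mult gs_pos less_imp_le mult_ac)
    qed
  qed measurable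
  have L: "(LINT y|lborel. gs l y * Pr \<sigma> l x1 x2 y) = 1 / sqrt (2 * pi) * (LINT y|lborel. LINT x|lborel. H x y)"
  proof -
    have "(LINT y|lborel. gs l y * Pr \<sigma> l x1 x2 y) = (LINT y|lborel. 1 / sqrt (2 * pi) * (LINT x|lborel. H x y))"
    proof (rule Bochner_Integration.integral_cong)
      fix y
      show "gs l y * Pr \<sigma> l x1 x2 y = 1 / sqrt (2 * pi) * (LINT x|lborel. H x y)"
        unfolding Pr_def H_def by simp
    qed simp
    then show ?thesis by simp
  qed
  have R: "(LINT x|lborel. LINT y|lborel. H x y) = sqrt (2 * pi) *
      (LINT x|lborel. \<sigma> x * gs l x * (l * exp (- (l * (x - x1))\<^sup>2 / 2) - l * exp (- (l * (x - x2))\<^sup>2 / 2)))"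
  proof -
    have "(LINT x|lborel. LINT y|lborel. H x y) = (LINT x|lborel. sqrt (2 * pi) * (\<sigma> x * gs l x * (l * exp (- (l * (x - x1))\<^sup>2 / 2) - l * exp (- (l * (x - x2))\<^sup>2 / 2))))"
    proof (rule Bochner_Integration.integral_cong)
      fix x
      have "(LINT y|lborel. H x y) = (LINT y|lborel. (\<sigma> x * gs l x) * (gs l y * cos (y * (x - x1)) - gs l y * cos (y * (x - x2))))"
        unfolding H_def by (rule Bochner_Integration.integral_cong) (simp_all add: algebra_simps)
      also have "\<dots> = (\<sigma> x * gs l x) * ((LINT y|lborel. gs l y * cos (y * (x - x1))) - (LINT y|lborel. gs l y * cos (y * (x - x2))))"
        using gcos_int[of "x - x1"] gcos_int[of "x - x2"]
        by (simp add: has_bochner_integral_iff Bochner_Integration.integral_diff)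
      also have "\<dots> = (\<sigma> x * gs l x) * (l * sqrt (2 * pi) * exp (- (l * (x - x1))\<^sup>2 / 2) - l * sqrt (2 * pi) * exp (- (l * (x - x2))\<^sup>2 / 2))"
        using gcos_int[of "x - x1"] gcos_int[of "x - x2"]
        by (simp add: has_bochner_integral_iff)
      finally show "(LINT y|lborel. H x y) = sqrt (2 * pi) * (\<sigma> x * gs l x * (l * exp (- (l * (x - x1))\<^sup>2 / 2) - l * exp (- (l * (x - x2))\<^sup>2 / 2)))"
        by (simp add: algebra_simps)
    qed simp
    then show ?thesis by simp
  qed
  show ?thesis
    unfolding L lborel_pair.Fubini_integral[OF Hint] R by simp
qed

end



lemma nd_eq: assumes l: "l > 0"
  shows "l * exp (- (l * (x - x0))\<^sup>2 / 2) = sqrt (2 * pi) * normal_density x0 (1 / l) x"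
proof -
  have "sqrt (2 * pi * (1 / l)\<^sup>2) = sqrt (2 * pi) / l"
    using l by (simp add: real_sqrt_mult power_divide real_sqrt_divide)
  moreover have "(x - x0)\<^sup>2 / (2 * (1 / l)\<^sup>2) = (l * (x - x0))\<^sup>2 / 2"
    using l by (simp add: power_mult_distrib power_divide field_simps power2_eq_square)
  ultimately show ?thesis using l unfolding normal_density_def by (simp add: field_simps)
qed

lemma near:
  fixes f :: "real \<Rightarrow> real" and l K x0 :: real
  assumes l: "l > 0" and fm[measurable]: "f \<in> borel_measurable borel"
    and fb: "\<And>x. \<bar>f x\<bar> \<le> 1"
    and lip: "\<And>x. \<bar>f x - f x0\<bar> \<le> K * \<bar>x - x0\<bar>"
  shows "\<bar>(LINT x|lborel. f x * (l * exp (- (l * (x - x0))\<^sup>2 / 2))) - sqrt (2 * pi) * f x0\<bar> \<le> 2 * K / l"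
proof -
  let ?N = "normal_density x0 (1 / l)"
  have i1: "integrable lborel (\<lambda>x. f x * ?N x)"
  proof (rule Bochner_Integration.integrable_bound[of _ ?N])
    show "AE x in lborel. norm (f x * ?N x) \<le> norm (?N x)"
    proof (intro AE_I2)
      fix x
      have "\<bar>f x\<bar> * ?N x \<le> 1 * ?N x" using fb[of x] by (intro mult_right_mono) auto
      then show "norm (f x * ?N x) \<le> norm (?N x)" by (simp add: abs_mult)
    qed
    show "integrable lborel ?N" by (rule integrable_normal_density) (use l in simp)
  qed auto
  have i2: "integrable lborel (\<lambda>x. ?N x * \<bar>x - x0\<bar>)"
    using integrable_normal_moment_abs[where \<sigma>="1/l" and \<mu>=x0 and k=1] l by simp
  have e1: "(LINT x|lborel. f x * (l * exp (- (l * (x - x0))\<^sup>2 / 2))) = sqrt (2 * pi) * (LINT x|lborel. f x * ?N x)"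
  proof -
    have "(LINT x|lborel. f x * (sqrt (2 * pi) * ?N x)) = (LINT x|lborel. sqrt (2 * pi) * (f x * ?N x))"
      by (simp add: mult_ac)
    also have "\<dots> = sqrt (2 * pi) * (LINT x|lborel. f x * ?N x)"
      by (rule Bochner_Integration.integral_mult_right_zero)
    finally show ?thesis unfolding nd_eq[OF l] .
  qed
  have e2: "(LINT x|lborel. f x * ?N x) - f x0 = (LINT x|lborel. (f x - f x0) * ?N x)"
  proof -
    have "(LINT x|lborel. (f x - f x0) * ?N x) = (LINT x|lborel. f x * ?N x) - (LINT x|lborel. f x0 * ?N x)"
      unfolding left_diff_distrib by (rule Bochner_Integration.integral_diff[OF i1]) (use l in simp)
    moreover have "(LINT x|lborel. f x0 * ?N x) = f x0"
      using integral_normal_density[where \<sigma>="1/l" and \<mu>=x0] l by simp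
    ultimately show ?thesis by simp
  qed
  have "\<bar>LINT x|lborel. (f x - f x0) * ?N x\<bar> \<le> (LINT x|lborel. K * (?N x * \<bar>x - x0\<bar>))"
  proof -
    have "\<bar>LINT x|lborel. (f x - f x0) * ?N x\<bar> \<le> (LINT x|lborel. norm ((f x - f x0) * ?N x))"
      using integral_norm_bound[of lborel "\<lambda>x. (f x - f x0) * ?N x"] by simp
    also have "\<dots> \<le> (LINT x|lborel. K * (?N x * \<bar>x - x0\<bar>))"
    proof (rule integral_mono)
      show "integrable lborel (\<lambda>x. norm ((f x - f x0) * ?N x))"
      proof (intro integrable_norm)
        have "integrable lborel (\<lambda>x. f x * ?N x - f x0 * ?N x)"
          using i1 integrable_normal_density[where \<sigma>="1/l" and \<mu>=x0] l by (intro Bochner_Integration.integrable_diff) auto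
        then show "integrable lborel (\<lambda>x. (f x - f x0) * ?N x)" by (simp add: left_diff_distrib)
      qed
      show "integrable lborel (\<lambda>x. K * (?N x * \<bar>x - x0\<bar>))" using i2 by simp
      fix x
      have "\<bar>f x - f x0\<bar> * ?N x \<le> (K * \<bar>x - x0\<bar>) * ?N x" using lip[of x] by (intro mult_right_mono) auto
      then show "norm ((f x - f x0) * ?N x) \<le> K * (?N x * \<bar>x - x0\<bar>)" by (simp add: abs_mult mult_ac)
    qed
    finally show ?thesis .
  qed
  also have "\<dots> = K * ((1 / l) * sqrt (2 / pi))"
    using integral_normal_moment_abs_odd[where \<sigma>="1/l" and \<mu>=x0 and k=0] l by simp
  finally have b: "\<bar>(LINT x|lborel. f x * ?N x) - f x0\<bar> \<le> K * ((1 / l) * sqrt (2 / pi))"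
    unfolding e2 .
  have "\<bar>(LINT x|lborel. f x * (l * exp (- (l * (x - x0))\<^sup>2 / 2))) - sqrt (2 * pi) * f x0\<bar>
      = sqrt (2 * pi) * \<bar>(LINT x|lborel. f x * ?N x) - f x0\<bar>"
    unfolding e1 by (simp add: abs_mult right_diff_distrib[symmetric])
  also have "\<dots> \<le> sqrt (2 * pi) * (K * ((1 / l) * sqrt (2 / pi)))"
    by (intro mult_left_mono b) auto
  also have "sqrt (2 * pi) * sqrt (2 / pi) = 2"
    by (simp add: real_sqrt_mult[symmetric])
  then have "sqrt (2 * pi) * (K * ((1 / l) * sqrt (2 / pi))) = 2 * K / l"
    by (simp add: field_simps)
  finally show ?thesis .
qed




lemma ab_ineq: fixes a b t :: real assumes "t > 0" shows "2 * a * b \<le> t * a\<^sup>2 + b\<^sup>2 / t"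
proof -
  have "0 \<le> (t * a - b)\<^sup>2 / t" using assms by simp
  also have "(t * a - b)\<^sup>2 / t = t * a\<^sup>2 + b\<^sup>2 / t - 2 * a * b"
    using assms by (simp add: power2_eq_square field_simps)
  finally show ?thesis by simp
qed

lemma tail_num:
  fixes l R \<epsilon> :: real
  assumes R: "R \<ge> 1" and e: "0 < \<epsilon>" "\<epsilon> < 1" and le: "l * \<epsilon> \<ge> 20 * R"
  shows "4 * sqrt pi * l\<^sup>2 * exp (- (4 * l * ln (l * R / \<epsilon>))\<^sup>2 / (4 * l\<^sup>2)) \<le> \<epsilon> / 2"
proof -
  define X where "X = l * R / \<epsilon>"
  have "l * \<epsilon> \<ge> 20" using le R by linarith
  moreover have lp: "l > 0"
  proof (rule ccontr)
    assume "\<not> l > 0"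
    then have "l * \<epsilon> \<le> 0" using e by (intro mult_nonpos_nonneg) auto
    then show False using \<open>l * \<epsilon> \<ge> 20\<close> by linarith
  qed
  moreover have "l * \<epsilon> \<le> l * 1" using lp e by (intro mult_left_mono) auto
  ultimately have l20: "l \<ge> 20" by linarith
  have "l * 1 \<le> l * (R / \<epsilon>)"
  proof (intro mult_left_mono)
    show "1 \<le> R / \<epsilon>" using e R by (simp add: field_simps)
  qed (use l20 in simp)
  then have lX: "l \<le> X" unfolding X_def by simp
  have X20: "X \<ge> 20" using lX l20 by simp
  have "l * 1 \<le> l * R" using R l20 by (intro mult_left_mono) auto
  then have "20 \<le> l * R" using l20 by linarith
  moreover have "\<epsilon> * X = l * R" unfolding X_def using e by simp
  ultimately have eX: "\<epsilon> * X \<ge> 20" by linarith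
  have "exp 2 \<le> (20::real)"
  proof -
    have "exp (2::real) = exp 1 * exp 1" by (simp add: exp_add[symmetric])
    also have "\<dots> \<le> 3 * 3" using exp_le by (intro mult_mono) auto
    finally show ?thesis by simp
  qed
  then have "exp 2 \<le> X" using X20 by simp
  then have "ln (exp 2) \<le> ln X" using X20 by (subst ln_le_cancel_iff) auto
  then have lnX: "ln X \<ge> 2" by simp
  have sq: "(4 * l * ln X)\<^sup>2 = 16 * l\<^sup>2 * (ln X)\<^sup>2" by (simp add: power_mult_distrib)
  have eq: "(4 * l * ln X)\<^sup>2 / (4 * l\<^sup>2) = 4 * (ln X)\<^sup>2"
    unfolding sq using l20 by simp
  have "4 * (ln X)\<^sup>2 \<ge> 8 * ln X"
  proof -
    have "ln X * 2 \<le> ln X * ln X" using lnX by (intro mult_left_mono) auto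
    then show ?thesis by (simp add: power2_eq_square)
  qed
  then have "- (4 * l * ln X)\<^sup>2 / (4 * l\<^sup>2) \<le> - (8 * ln X)" using eq by simp
  then have "exp (- (4 * l * ln X)\<^sup>2 / (4 * l\<^sup>2)) \<le> exp (- (8 * ln X))" by (subst exp_le_cancel_iff)
  also have "exp (- (8 * ln X)) = inverse (X ^ 8)"
  proof -
    have "exp (8 * ln X) = exp (ln X) ^ 8" using exp_of_nat_mult[of 8 "ln X"] by simp
    also have "\<dots> = X ^ 8" using X20 by simp
    finally show ?thesis by (simp add: exp_minus)
  qed
  finally have E: "exp (- (4 * l * ln X)\<^sup>2 / (4 * l\<^sup>2)) \<le> inverse (X ^ 8)" .
  have sp: "sqrt pi \<le> 2"
  proof -
    have "sqrt pi \<le> sqrt 4" using pi_less_4 by (intro real_sqrt_le_mono) simp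
    then show ?thesis by simp
  qed
  have "4 * sqrt pi * l\<^sup>2 * exp (- (4 * l * ln X)\<^sup>2 / (4 * l\<^sup>2)) \<le> 4 * 2 * X\<^sup>2 * inverse (X ^ 8)"
    using sp E lX l20 by (intro mult_mono power_mono) auto
  also have "X\<^sup>2 * inverse (X ^ 8) = inverse (X ^ 6)"
  proof -
    have "X ^ 8 = X\<^sup>2 * X ^ 6" by (simp add: power_add[symmetric])
    then have "X\<^sup>2 * inverse (X ^ 8) = (X\<^sup>2 * inverse (X\<^sup>2)) * inverse (X ^ 6)"
      by (simp only: inverse_mult_distrib mult.assoc)
    also have "X\<^sup>2 * inverse (X\<^sup>2) = 1" using X20 by simp
    finally show ?thesis by simp
  qed
  then have "4 * 2 * X\<^sup>2 * inverse (X ^ 8) = 8 * inverse (X ^ 6)" by simp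
  also have "8 * inverse (X ^ 6) \<le> \<epsilon> / 2"
  proof -
    have X5: "X ^ 5 \<ge> 1" using X20 by (simp add: one_le_power)
    have "20 * 1 \<le> (\<epsilon> * X) * X ^ 5" using eX X5 by (intro mult_mono) auto
    also have "\<dots> = \<epsilon> * X ^ 6" by (simp add: power_Suc[symmetric] mult.assoc)
    finally have "\<epsilon> * X ^ 6 \<ge> 16" by simp
    moreover have "X ^ 6 > 0" using X20 by simp
    ultimately show ?thesis by (simp add: field_simps)
  qed
  finally show ?thesis unfolding X_def .
qed




theorem corollary4p10:
  fixes \<sigma> :: "real \<Rightarrow> real" and L R \<epsilon> l :: real
  assumes bdd: "\<And>x. \<bar>\<sigma> x\<bar> \<le> 1"
    and lip: "L-lipschitz_on UNIV \<sigma>"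
    and nondeg: "nondegenerate R \<epsilon> \<sigma>"
    and R: "R \<ge> 1" and eps_pos: "0 < \<epsilon>" and eps_lt: "\<epsilon> < 1"
    and ell: "l \<ge> 20 * (R + L) / \<epsilon>"
  shows "integral ({-(4 * l * ln (l * R / \<epsilon>)) .. -(\<epsilon> / 8 * sqrt (1 / (R * l)))} \<union>
                   {\<epsilon> / 8 * sqrt (1 / (R * l)) .. 4 * l * ln (l * R / \<epsilon>)})
           (\<lambda>y. (cmod (fourier (\<lambda>x. complex_of_real (\<sigma> x * exp (- x\<^sup>2 / (2 * l\<^sup>2)))) y))\<^sup>2)
         \<ge> \<epsilon>\<^sup>2 / (8 * R * l\<^sup>2)"
proof -
  obtain x1 x2 where x1: "x1 \<in> {-R..R}" and x2: "x2 \<in> {-R..R}" and dx: "\<sigma> x1 - \<sigma> x2 \<ge> \<epsilon>"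
    using nondeg unfolding nondegenerate_def by blast
  have L0: "L \<ge> 0" using lip by (rule lipschitz_on_nonneg)
  have le: "20 * (R + L) \<le> l * \<epsilon>" using ell eps_pos by (simp add: pos_divide_le_eq)
  have le': "20 * R + 20 * L \<le> l * \<epsilon>" using le by (simp add: algebra_simps)
  have le1: "l * \<epsilon> \<ge> 20 * R" using le' L0 by linarith
  have le20: "l * \<epsilon> \<ge> 20" using le1 R by linarith
  have lp: "l > 0"
  proof (rule ccontr)
    assume "\<not> l > 0"
    then have "l * \<epsilon> \<le> 0" using eps_pos by (intro mult_nonpos_nonneg) auto
    then show False using le20 by linarith
  qed
  have "l * \<epsilon> \<le> l * 1" using lp eps_lt by (intro mult_left_mono) auto
  then have l20: "l \<ge> 20" using le20 by linarith
  have smeas[measurable]: "\<sigma> \<in> borel_measurable borel"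
    using lipschitz_on_continuous_on[OF lip] by (rule borel_measurable_continuous_onI)
  define f where "f = (\<lambda>x. \<sigma> x * gs l x)"
  have fm[measurable]: "f \<in> borel_measurable borel" unfolding f_def by measurable
  have fb: "\<bar>f x\<bar> \<le> 1" for x
    using fx_bound[OF bdd smeas lp, of x] gs_le_1[of l x] unfolding f_def by linarith
  have flip: "\<bar>f x - f x0\<bar> \<le> (L + 1) * \<bar>x - x0\<bar>" for x x0
  proof -
    have "f x - f x0 = (\<sigma> x - \<sigma> x0) * gs l x + \<sigma> x0 * (gs l x - gs l x0)"
      by (simp add: f_def algebra_simps)
    then have "\<bar>f x - f x0\<bar> \<le> \<bar>\<sigma> x - \<sigma> x0\<bar> * \<bar>gs l x\<bar> + \<bar>\<sigma> x0\<bar> * \<bar>gs l x - gs l x0\<bar>"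
      by (simp add: abs_mult[symmetric] abs_triangle_ineq)
    also have "\<dots> \<le> (L * \<bar>x - x0\<bar>) * 1 + 1 * \<bar>x - x0\<bar>"
    proof (intro add_mono mult_mono)
      show "\<bar>\<sigma> x - \<sigma> x0\<bar> \<le> L * \<bar>x - x0\<bar>"
        using lipschitz_onD[OF lip, of x x0] by (simp add: dist_real_def)
      show "\<bar>gs l x\<bar> \<le> 1" using gs_pos[of l x] gs_le_1[of l x] by simp
      show "\<bar>gs l x - gs l x0\<bar> \<le> \<bar>x - x0\<bar>"
        unfolding gs_def using gs_lip[of l x x0] l20 by simp
    qed (use bdd L0 in auto)
    finally show ?thesis by (simp add: algebra_simps)
  qed
  have fapprox: "\<bar>f x - \<sigma> x\<bar> \<le> R\<^sup>2 / (2 * l\<^sup>2)" if x: "x \<in> {-R..R}" for x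
  proof -
    have "f x - \<sigma> x = - (\<sigma> x * (1 - gs l x))" by (simp add: f_def algebra_simps)
    then have "\<bar>f x - \<sigma> x\<bar> = \<bar>\<sigma> x\<bar> * (1 - gs l x)"
      using gs_le_1[of l x] by (simp add: abs_mult)
    also have "\<dots> \<le> 1 * (1 - gs l x)" using bdd[of x] gs_le_1[of l x] by (intro mult_right_mono) auto
    also have "1 - gs l x \<le> x\<^sup>2 / (2 * l\<^sup>2)"
      using exp_ge_add_one_self[of "- x\<^sup>2 / (2 * l\<^sup>2)"] unfolding gs_def by simp
    also have "x\<^sup>2 / (2 * l\<^sup>2) \<le> R\<^sup>2 / (2 * l\<^sup>2)"
    proof (intro divide_right_mono)
      have "\<bar>x\<bar> \<le> R" using x by auto
      then have "\<bar>x\<bar>\<^sup>2 \<le> R\<^sup>2" by (intro power_mono) auto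
      then show "x\<^sup>2 \<le> R\<^sup>2" by simp
    qed simp
    finally show ?thesis by simp
  qed
  define h where "h = (\<lambda>y. gs l y * Pr \<sigma> l x1 x2 y)"
  have hm[measurable]: "h \<in> borel_measurable borel"
    unfolding h_def using P_meas[OF bdd smeas lp] by measurable
  have hb: "\<bar>h y\<bar> \<le> 2 * l * gs l y" for y
  proof -
    have "\<bar>h y\<bar> = gs l y * \<bar>Pr \<sigma> l x1 x2 y\<bar>" unfolding h_def using gs_pos[of l y] by (simp add: abs_mult)
    also have "\<dots> \<le> gs l y * (2 * l)" using P3[OF bdd smeas lp] gs_pos[of l y] by (intro mult_left_mono) auto
    finally show ?thesis by (simp add: mult_ac)
  qed
  have hint: "integrable lborel h"
    by (rule bound_integrable[OF bdd smeas lp hm, where c="2*l"]) (use hb in simp)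
  define E where "E = (\<lambda>x0 x. l * exp (- (l * (x - x0))\<^sup>2 / 2))"
  have Eb: "\<bar>E x0 x\<bar> \<le> l" for x0 x unfolding E_def using lp by simp
  have Eint: "integrable lborel (\<lambda>x. f x * E x0 x)" for x0
  proof (rule bound_integrable[OF bdd smeas lp, where c=l])
    show "(\<lambda>x. f x * E x0 x) \<in> borel_measurable borel" unfolding E_def by measurable
    fix x
    have "\<bar>f x\<bar> * \<bar>E x0 x\<bar> \<le> gs l x * l"
      using fx_bound[OF bdd smeas lp, of x] Eb[of x0 x] gs_pos[of l x] unfolding f_def
      by (intro mult_mono) auto
    then show "norm (f x * E x0 x) \<le> l * gs l x" by (simp add: abs_mult mult_ac)
  qed
  have I_eq: "(LINT y|lborel. h y) = (LINT x|lborel. f x * E x1 x) - (LINT x|lborel. f x * E x2 x)"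
  proof -
    have "(LINT y|lborel. h y) = (LINT x|lborel. f x * E x1 x - f x * E x2 x)"
      unfolding h_def fub[OF bdd smeas lp] f_def E_def by (simp add: right_diff_distrib)
    also have "\<dots> = (LINT x|lborel. f x * E x1 x) - (LINT x|lborel. f x * E x2 x)"
      by (rule Bochner_Integration.integral_diff[OF Eint Eint])
    finally show ?thesis .
  qed
  have n1: "\<bar>(LINT x|lborel. f x * E x1 x) - sqrt (2 * pi) * f x1\<bar> \<le> 2 * (L + 1) / l"
    unfolding E_def by (rule near[OF lp fm fb flip])
  have n2: "\<bar>(LINT x|lborel. f x * E x2 x) - sqrt (2 * pi) * f x2\<bar> \<le> 2 * (L + 1) / l"
    unfolding E_def by (rule near[OF lp fm fb flip])
  have s2pi: "sqrt (2 * pi) \<ge> 2.4"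
  proof (rule real_le_rsqrt)
    show "2.4\<^sup>2 \<le> 2 * pi" using pi_gt3 by (simp add: power2_eq_square)
  qed
  have s2pi': "sqrt (2 * pi) \<le> 3"
  proof (rule real_sqrt_le_iff[THEN iffD2, of _ 9, simplified])
    show "2 * pi \<le> 9" using pi_less_4 by simp
  qed
  have Rl: "R / l \<le> \<epsilon> / 20" using le1 lp by (simp add: field_simps)
  have Rl2: "R\<^sup>2 / l\<^sup>2 \<le> \<epsilon> / 400"
  proof -
    have "(R / l)\<^sup>2 \<le> (\<epsilon> / 20)\<^sup>2" using Rl R lp by (intro power_mono) auto
    also have "(\<epsilon> / 20)\<^sup>2 \<le> \<epsilon> / 400" using eps_pos eps_lt by (simp add: power2_eq_square)
    finally show ?thesis by (simp add: power_divide)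
  qed
  have Ll: "4 * (L + 1) / l \<le> \<epsilon> / 5" using le' R lp by (simp add: field_simps)
  have fdiff: "f x1 - f x2 \<ge> \<epsilon> - R\<^sup>2 / l\<^sup>2"
    using fapprox[OF x1] fapprox[OF x2] dx by (simp add: abs_le_iff) 
  have Ibound: "(LINT y|lborel. h y) \<ge> 2 * \<epsilon> + \<epsilon> / 8"
  proof -
    have "(LINT y|lborel. h y) \<ge> sqrt (2 * pi) * (f x1 - f x2) - 4 * (L + 1) / l"
    proof -
      have q: "4 * (L + 1) / l = 2 * (L + 1) / l + 2 * (L + 1) / l" by (simp add: add_divide_distrib[symmetric])
      have "sqrt (2 * pi) * (f x1 - f x2) = sqrt (2 * pi) * f x1 - sqrt (2 * pi) * f x2"
        by (simp add: right_diff_distrib)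
      then show ?thesis using n1 n2 q unfolding I_eq abs_le_iff by linarith
    qed
    moreover have "sqrt (2 * pi) * (f x1 - f x2) \<ge> 2.4 * (\<epsilon> - \<epsilon> / 400)"
      using s2pi fdiff Rl2 eps_pos by (intro mult_mono) auto
    moreover have "\<And>I P D. P - D \<le> I \<Longrightarrow> 24/10*(\<epsilon> - \<epsilon>/400) \<le> P \<Longrightarrow> D \<le> \<epsilon>/5 \<Longrightarrow> 2*\<epsilon> + \<epsilon>/8 \<le> (I::real)"
      using eps_pos by (simp add: field_simps)
    ultimately show ?thesis using Ll by blast
  qed
  define a where "a = \<epsilon> / 8 * sqrt (1 / (R * l))"
  define B where "B = 4 * l * ln (l * R / \<epsilon>)"
  define S where "S = {-B..-a} \<union> {a..B}"
  define Lo where "Lo = {-a<..<a}"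
  define T where "T = {..<-B} \<union> {B<..}"
  have Rl1: "R * l \<ge> 1" using R l20 by (metis less_eq_real_def mult_mono' one_le_numeral order_trans zero_le_one mult_1_right)
  have a0: "a > 0" unfolding a_def using eps_pos Rl1 by simp
  have a1: "a < 1"
  proof -
    have "sqrt (1 / (R * l)) \<le> 1" using Rl1 by simp
    then have "a \<le> \<epsilon> / 8" unfolding a_def using eps_pos by (simp add: mult_left_le)
    then show ?thesis using eps_lt by linarith
  qed
  have asq: "a\<^sup>2 = \<epsilon>\<^sup>2 / (64 * (R * l))"
    unfolding a_def using Rl1 by (simp add: power_mult_distrib power_divide)
  have X1: "l * R / \<epsilon> \<ge> exp 1"
  proof -
    have "l * 1 \<le> l * R" using R lp by (intro mult_left_mono) auto
    moreover have "l * R \<le> l * R / \<epsilon>" using eps_pos eps_lt lp R by (simp add: field_simps)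
    moreover have "exp 1 \<le> (3::real)" by (rule exp_le)
    ultimately show ?thesis using l20 by linarith
  qed
  have B1: "B \<ge> 1"
  proof -
    have "0 < exp (1::real)" by simp
    then have "0 < l * R / \<epsilon>" using X1 by linarith
    then have "ln (exp 1) \<le> ln (l * R / \<epsilon>)" using X1 by (subst ln_le_cancel_iff) auto
    then have "ln (l * R / \<epsilon>) \<ge> 1" by simp
    then have "4 * l * 1 \<le> 4 * l * ln (l * R / \<epsilon>)" using lp by (intro mult_left_mono) auto
    then show ?thesis unfolding B_def using l20 by linarith
  qed
  have aB: "a < B" using a1 B1 by linarith
  have ind: "indicator S y + indicator Lo y + indicator T y = (1::real)" for y
    unfolding S_def Lo_def T_def indicator_def using aB a0 by auto
  have Sm[measurable]: "S \<in> sets borel" unfolding S_def by simp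
  have Lm[measurable]: "Lo \<in> sets borel" unfolding Lo_def by simp
  have Tm[measurable]: "T \<in> sets borel" unfolding T_def by simp
  have iS: "integrable lborel (\<lambda>y. indicator S y * h y)"
    using integrable_mult_indicator[of S lborel h] hint by simp
  have iL: "integrable lborel (\<lambda>y. indicator Lo y * h y)"
    using integrable_mult_indicator[of Lo lborel h] hint by simp
  have iT: "integrable lborel (\<lambda>y. indicator T y * h y)"
    using integrable_mult_indicator[of T lborel h] hint by simp
  have decomp: "(LINT y|lborel. h y) = (LINT y|lborel. indicator S y * h y) + (LINT y|lborel. indicator Lo y * h y)
      + (LINT y|lborel. indicator T y * h y)"
  proof -
    have "(LINT y|lborel. h y) = (LINT y|lborel. indicator S y * h y + indicator Lo y * h y + indicator T y * h y)"
    proof (rule Bochner_Integration.integral_cong)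
      fix y
      have "h y = (indicator S y + indicator Lo y + indicator T y) * h y" using ind[of y] by simp
      then show "h y = indicator S y * h y + indicator Lo y * h y + indicator T y * h y" by (simp add: algebra_simps)
    qed simp
    also have "\<dots> = (LINT y|lborel. indicator S y * h y + indicator Lo y * h y) + (LINT y|lborel. indicator T y * h y)"
      by (intro Bochner_Integration.integral_add Bochner_Integration.integrable_add iS iL iT)
    also have "(LINT y|lborel. indicator S y * h y + indicator Lo y * h y) = (LINT y|lborel. indicator S y * h y) + (LINT y|lborel. indicator Lo y * h y)"
      by (intro Bochner_Integration.integral_add iS iL)
    finally show ?thesis .
  qed
  have x12: "\<bar>x1 - x2\<bar> \<le> 2 * R" using x1 x2 by auto
  have lowb: "\<bar>LINT y|lborel. indicator Lo y * h y\<bar> \<le> \<epsilon>\<^sup>2 / 16"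
  proof -
    have pw: "\<bar>indicator Lo y * h y\<bar> \<le> indicator Lo y * (a * (2 * R) * l)" for y
    proof (cases "y \<in> Lo")
      case True
      then have ya: "\<bar>y\<bar> \<le> a" unfolding Lo_def by auto
      have "\<bar>h y\<bar> = gs l y * \<bar>Pr \<sigma> l x1 x2 y\<bar>" unfolding h_def using gs_pos[of l y] by (simp add: abs_mult)
      also have "\<dots> \<le> 1 * (\<bar>y\<bar> * \<bar>x1 - x2\<bar> * l)"
        using gs_le_1[of l y] P4[OF bdd smeas lp, of x1 x2 y] by (intro mult_mono) auto
      also have "\<dots> \<le> a * (2 * R) * l" using ya x12 lp by (simp, intro mult_mono) auto
      finally show ?thesis using True by simp
    qed simp
    have "\<bar>LINT y|lborel. indicator Lo y * h y\<bar> \<le> (LINT y|lborel. \<bar>indicator Lo y * h y\<bar>)"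
      using integral_norm_bound[of lborel "\<lambda>y. indicator Lo y * h y"] by simp
    also have "\<dots> \<le> (LINT y|lborel. indicator Lo y * (a * (2 * R) * l))"
    proof (rule integral_mono)
      show "integrable lborel (\<lambda>y. \<bar>indicator Lo y * h y\<bar>)" using iL by simp
      show "integrable lborel (\<lambda>y. indicator Lo y * (a * (2 * R) * l))"
      proof (intro integrable_mult_left integrable_real_indicator)
        have "emeasure lborel Lo = ennreal (a - (- a))" unfolding Lo_def using a0 by (intro emeasure_lborel_Ioo) auto
        then show "emeasure lborel Lo < \<infinity>" by simp
      qed simp
    qed (rule pw)
    also have "\<dots> = (2 * a) * (a * (2 * R) * l)"
      unfolding Lo_def using a0 by simp
    also have "\<dots> = 4 * (R * l) * a\<^sup>2" by (simp add: power2_eq_square mult_ac)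
    also have "\<dots> = \<epsilon>\<^sup>2 / 16" unfolding asq using lp R by simp
    finally show ?thesis .
  qed
  have tailb: "\<bar>LINT y|lborel. indicator T y * h y\<bar> \<le> \<epsilon> / 2"
  proof -
    define c where "c = 2 * l * exp (- B\<^sup>2 / (4 * l\<^sup>2))"
    have gs2: "gs (sqrt 2 * l) y = exp (- y\<^sup>2 / (4 * l\<^sup>2))" for y
      unfolding gs_def by (simp add: power_mult_distrib)
    have gsi: "has_bochner_integral lborel (gs (sqrt 2 * l)) (sqrt 2 * l * sqrt (2 * pi))"
      using gs_int[of "sqrt 2 * l"] lp unfolding gs_def[abs_def] by simp
    have pw: "\<bar>indicator T y * h y\<bar> \<le> c * gs (sqrt 2 * l) y" for y
    proof (cases "y \<in> T")
      case True
      then have "B < \<bar>y\<bar>" unfolding T_def by auto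
      then have "B\<^sup>2 \<le> \<bar>y\<bar>\<^sup>2" using B1 by (intro power_mono) auto
      then have "B\<^sup>2 \<le> y\<^sup>2" by simp
      then have e1: "exp (- y\<^sup>2 / (4 * l\<^sup>2)) \<le> exp (- B\<^sup>2 / (4 * l\<^sup>2))"
        using lp by (simp add: divide_right_mono)
      have "gs l y = exp (- y\<^sup>2 / (4 * l\<^sup>2)) * exp (- y\<^sup>2 / (4 * l\<^sup>2))"
        unfolding gs_def by (simp add: exp_add[symmetric])
      also have "\<dots> \<le> exp (- B\<^sup>2 / (4 * l\<^sup>2)) * exp (- y\<^sup>2 / (4 * l\<^sup>2))"
        using e1 by (intro mult_right_mono) auto
      finally have "gs l y \<le> exp (- B\<^sup>2 / (4 * l\<^sup>2)) * gs (sqrt 2 * l) y" unfolding gs2 .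
      then have "2 * l * gs l y \<le> 2 * l * (exp (- B\<^sup>2 / (4 * l\<^sup>2)) * gs (sqrt 2 * l) y)"
        using lp by (intro mult_left_mono) auto
      then show ?thesis using True hb[of y] unfolding c_def by (simp add: mult_ac)
    next
      case False
      then show ?thesis unfolding c_def using gs_pos[of "sqrt 2 * l" y] lp by simp
    qed
    have "\<bar>LINT y|lborel. indicator T y * h y\<bar> \<le> (LINT y|lborel. \<bar>indicator T y * h y\<bar>)"
      using integral_norm_bound[of lborel "\<lambda>y. indicator T y * h y"] by simp
    also have "\<dots> \<le> (LINT y|lborel. c * gs (sqrt 2 * l) y)"
    proof (rule integral_mono)
      show "integrable lborel (\<lambda>y. \<bar>indicator T y * h y\<bar>)" using iT by simp
      show "integrable lborel (\<lambda>y. c * gs (sqrt 2 * l) y)"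
        using gsi by (intro integrable_mult_right) (simp add: has_bochner_integral_iff)
    qed (rule pw)
    also have "\<dots> = c * (sqrt 2 * l * sqrt (2 * pi))"
      using gsi by (simp add: has_bochner_integral_iff)
    also have "sqrt 2 * sqrt (2 * pi) = 2 * sqrt pi"
    proof -
      have "sqrt 2 * sqrt (2 * pi) = sqrt (4 * pi)" by (simp add: real_sqrt_mult[symmetric])
      also have "\<dots> = sqrt 4 * sqrt pi" by (rule real_sqrt_mult)
      finally show ?thesis by simp
    qed
    then have "c * (sqrt 2 * l * sqrt (2 * pi)) = 4 * sqrt pi * l\<^sup>2 * exp (- B\<^sup>2 / (4 * l\<^sup>2))"
      unfolding c_def by (simp add: power2_eq_square mult_ac)
    also have "\<dots> \<le> \<epsilon> / 2"
      unfolding B_def by (rule tail_num[OF R eps_pos eps_lt le1])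
    finally show ?thesis .
  qed
  define Fh where "Fh = (\<lambda>y. fourier (\<lambda>x. complex_of_real (\<sigma> x * gs l x)) y)"
  have Fm[measurable]: "Fh \<in> borel_measurable borel"
    unfolding Fh_def using fourier_meas[OF bdd smeas lp] by simp
  have Fn: "cmod (Fh y) \<le> l" for y unfolding Fh_def by (rule fourier_norm[OF bdd smeas lp])
  have iF: "integrable lborel (\<lambda>y. indicator S y * (cmod (Fh y))\<^sup>2)"
  proof (rule Bochner_Integration.integrable_bound[of _ "\<lambda>y. l\<^sup>2 * indicator {-B..B} y"])
    show "integrable lborel (\<lambda>y. l\<^sup>2 * indicator {-B..B} y)"
      by (intro integrable_mult_right integrable_real_indicator) (auto simp: emeasure_lborel_Icc_eq)
    show "AE y in lborel. norm (indicator S y * (cmod (Fh y))\<^sup>2) \<le> norm (l\<^sup>2 * indicator {-B..B} y)"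
    proof (intro AE_I2)
      fix y
      have "(cmod (Fh y))\<^sup>2 \<le> l\<^sup>2" using Fn[of y] by (intro power_mono) auto
      moreover have "y \<in> S \<Longrightarrow> y \<in> {-B..B}" unfolding S_def using a0 by auto
      ultimately show "norm (indicator S y * (cmod (Fh y))\<^sup>2) \<le> norm (l\<^sup>2 * indicator {-B..B} y)"
        by (auto simp: indicator_def)
    qed
  qed measurable
  define J where "J = (LINT y|lborel. indicator S y * (cmod (Fh y))\<^sup>2)"
  define t where "t = 2 * l * sqrt (2 * pi) / \<epsilon>"
  have t0: "t > 0" unfolding t_def using lp eps_pos by simp
  have pwS: "indicator S y * h y \<le> t * (indicator S y * (cmod (Fh y))\<^sup>2) + gs l y / t" for y
  proof (cases "y \<in> S")
    case True
    have "h y \<le> gs l y * \<bar>Pr \<sigma> l x1 x2 y\<bar>" unfolding h_def using gs_pos[of l y]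
      by (intro mult_left_mono) auto
    also have "\<dots> \<le> gs l y * (2 * cmod (Fh y))"
      unfolding Fh_def using P2[OF bdd smeas lp, of x1 x2 y] gs_pos[of l y] by (intro mult_left_mono) auto
    also have "\<dots> = 2 * cmod (Fh y) * gs l y" by simp
    also have "\<dots> \<le> t * (cmod (Fh y))\<^sup>2 + (gs l y)\<^sup>2 / t" by (rule ab_ineq[OF t0])
    also have "(gs l y)\<^sup>2 / t \<le> gs l y / t"
    proof (intro divide_right_mono)
      have "gs l y * gs l y \<le> gs l y * 1" using gs_pos[of l y] gs_le_1[of l y] by (intro mult_left_mono) auto
      then show "(gs l y)\<^sup>2 \<le> gs l y" by (simp add: power2_eq_square)
    qed (use t0 in simp)
    finally show ?thesis using True by simp
  next
    case False
    then show ?thesis using gs_pos[of l y] t0 by simp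
  qed
  have Sb: "(LINT y|lborel. indicator S y * h y) \<le> t * J + l * sqrt (2 * pi) / t"
  proof -
    have "(LINT y|lborel. indicator S y * h y) \<le> (LINT y|lborel. t * (indicator S y * (cmod (Fh y))\<^sup>2) + gs l y / t)"
    proof (rule integral_mono)
      show "integrable lborel (\<lambda>y. t * (indicator S y * (cmod (Fh y))\<^sup>2) + gs l y / t)"
        using iF gs_integrable[OF bdd smeas lp] by (intro Bochner_Integration.integrable_add integrable_mult_right integrable_divide) auto
    qed (use iS pwS in auto)
    also have "\<dots> = t * J + (LINT y|lborel. gs l y) / t"
      unfolding J_def using iF gs_integrable[OF bdd smeas lp]
      by (subst Bochner_Integration.integral_add) auto
    also have "(LINT y|lborel. gs l y) = l * sqrt (2 * pi)" by (rule gs_integral[OF bdd smeas lp])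
    finally show ?thesis .
  qed
  have tt: "l * sqrt (2 * pi) / t = \<epsilon> / 2" unfolding t_def using lp eps_pos by simp
  have A: "(LINT y|lborel. indicator S y * h y) \<ge> \<epsilon>"
  proof -
    have "\<epsilon>\<^sup>2 / 16 \<le> \<epsilon> / 16" using eps_pos eps_lt by (simp add: power2_eq_square)
    then show ?thesis using decomp Ibound lowb tailb unfolding abs_le_iff by linarith
  qed
  have tJ: "t * J \<ge> \<epsilon> / 2" using A Sb unfolding tt by linarith
  have Jb: "J \<ge> \<epsilon>\<^sup>2 / (4 * l * sqrt (2 * pi))"
  proof -
    have "\<epsilon> / 2 / t \<le> J" using tJ t0 by (simp add: pos_divide_le_eq mult.commute)
    moreover have "\<epsilon> / 2 / t = \<epsilon>\<^sup>2 / (4 * l * sqrt (2 * pi))"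
      unfolding t_def using lp eps_pos by (simp add: power2_eq_square field_simps)
    ultimately show ?thesis by simp
  qed
  have fin: "\<epsilon>\<^sup>2 / (8 * R * l\<^sup>2) \<le> \<epsilon>\<^sup>2 / (4 * l * sqrt (2 * pi))"
  proof (rule frac_le)
    show "0 < 4 * l * sqrt (2 * pi)" using lp by simp
    have "4 * l * sqrt (2 * pi) \<le> 4 * l * 3" using s2pi' lp by (intro mult_left_mono) auto
    also have "4 * l * 3 \<le> 8 * R * l\<^sup>2"
    proof -
      have "1 * l \<le> R * l" using R lp by (intro mult_right_mono) auto
      then have "12 \<le> 8 * (R * l)" using l20 by linarith
      then have "l * 12 \<le> l * (8 * (R * l))" using lp by (intro mult_left_mono) auto
      then show ?thesis by (simp add: power2_eq_square mult_ac)
    qed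
    finally show "4 * l * sqrt (2 * pi) \<le> 8 * R * l\<^sup>2" .
  qed simp_all
  have FFeq: "(\<lambda>x. complex_of_real (\<sigma> x * exp (- x\<^sup>2 / (2 * l\<^sup>2)))) = (\<lambda>x. complex_of_real (\<sigma> x * gs l x))"
    by (simp add: gs_def)
  have si: "set_integrable lborel S (\<lambda>y. (cmod (Fh y))\<^sup>2)"
    unfolding set_integrable_def using iF by simp
  have "integral S (\<lambda>y. (cmod (Fh y))\<^sup>2) = J"
    unfolding J_def set_borel_integral_eq_integral(2)[OF si, symmetric] set_lebesgue_integral_def by simp
  then have "integral S (\<lambda>y. (cmod (fourier (\<lambda>x. complex_of_real (\<sigma> x * exp (- x\<^sup>2 / (2 * l\<^sup>2)))) y))\<^sup>2) = J"
    unfolding FFeq Fh_def .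
  then show ?thesis using Jb fin unfolding S_def a_def B_def by linarith
qed


end
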